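(* Let $H$ be a component of $G[\overline{C}]$, and let $v_1,v_2$ be the unique neighbors in $H$ of $x_1,x_2$ respectively. Then $H$ is a $v_1,v_2$-path.
   Context: All graphs are simple. $\mathcal{G}^*$ denotes the class of graphs in which any two distinct odd cycles share at most one edge. Standing setting: $G\in\mathcal{G}^*$ is $2$-connected, and $C$ is a longest odd cycle of $G$ with $|C|\ge 5$. We also write $C$ for its vertex set. Let $\overline{C}=V(G)\setminus C$, assumed nonempty. For $v\in\overline{C}$ and $w\in C$, $v$ touches $w$ if there is a $v,w$-path meeting $C$ only at $w$. $T(v)=\{w\in C: v \text{ touches } w\}$. In this setting, $T(v)$ is the same set for all $v\in\overline{C}$; this set is $\{x_1,x_2\}$ for two adjacent vertices $x_1,x_2$ of $C$. Moreover, each of $x_1,x_2$ has exactly one neighbor in each component of $G[\overline{C}]$. *)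

theory Defs
  imports Main
begin

definition simple_graph :: "'a set \<Rightarrow> ('a \<Rightarrow> 'a \<Rightarrow> bool) \<Rightarrow> bool" where
  "simple_graph V E \<longleftrightarrow> finite V \<and>
     (\<forall>x y. E x y \<longrightarrow> x \<in> V \<and> y \<in> V \<and> x \<noteq> y \<and> E y x)"

definition is_path :: "'a set \<Rightarrow> ('a \<Rightarrow> 'a \<Rightarrow> bool) \<Rightarrow> 'a list \<Rightarrow> bool" where
  "is_path V E ps \<longleftrightarrow> ps \<noteq> [] \<and> distinct ps \<and> set ps \<subseteq> V \<and>
     (\<forall>i. Suc i < length ps \<longrightarrow> E (ps ! i) (ps ! Suc i))"

definition is_cycle :: "'a set \<Rightarrow> ('a \<Rightarrow> 'a \<Rightarrow> bool) \<Rightarrow> 'a list \<Rightarrow> bool" where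
  "is_cycle V E cs \<longleftrightarrow> length cs \<ge> 3 \<and> distinct cs \<and> set cs \<subseteq> V \<and>
     (\<forall>i < length cs. E (cs ! i) (cs ! ((Suc i) mod length cs)))"

definition cycle_edges :: "'a list \<Rightarrow> 'a set set" where
  "cycle_edges cs = {{cs ! i, cs ! ((Suc i) mod length cs)} | i. i < length cs}"

definition is_odd_cycle :: "'a set \<Rightarrow> ('a \<Rightarrow> 'a \<Rightarrow> bool) \<Rightarrow> 'a list \<Rightarrow> bool" where
  "is_odd_cycle V E cs \<longleftrightarrow> is_cycle V E cs \<and> odd (length cs)"

definition in_G_star :: "'a set \<Rightarrow> ('a \<Rightarrow> 'a \<Rightarrow> bool) \<Rightarrow> bool" where
  "in_G_star V E \<longleftrightarrow> (\<forall>c1 c2. is_odd_cycle V E c1 \<and> is_odd_cycle V E c2 \<and>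
       cycle_edges c1 \<noteq> cycle_edges c2 \<longrightarrow> card (cycle_edges c1 \<inter> cycle_edges c2) \<le> 1)"

definition connected_on :: "('a \<Rightarrow> 'a \<Rightarrow> bool) \<Rightarrow> 'a set \<Rightarrow> bool" where
  "connected_on E S \<longleftrightarrow> (\<forall>x\<in>S. \<forall>y\<in>S. \<exists>ps. is_path S E ps \<and> hd ps = x \<and> last ps = y)"

definition two_connected :: "'a set \<Rightarrow> ('a \<Rightarrow> 'a \<Rightarrow> bool) \<Rightarrow> bool" where
  "two_connected V E \<longleftrightarrow> card V \<ge> 3 \<and> connected_on E V \<and>
     (\<forall>v\<in>V. connected_on E (V - {v}))"

definition is_component :: "('a \<Rightarrow> 'a \<Rightarrow> bool) \<Rightarrow> 'a set \<Rightarrow> 'a set \<Rightarrow> bool" where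
  "is_component E S H \<longleftrightarrow> H \<noteq> {} \<and> H \<subseteq> S \<and> connected_on E H \<and>
     (\<forall>x\<in>H. \<forall>y\<in>S. E x y \<longrightarrow> y \<in> H)"

definition longest_odd_cycle :: "'a set \<Rightarrow> ('a \<Rightarrow> 'a \<Rightarrow> bool) \<Rightarrow> 'a list \<Rightarrow> bool" where
  "longest_odd_cycle V E cs \<longleftrightarrow> is_odd_cycle V E cs \<and>
     (\<forall>ds. is_odd_cycle V E ds \<longrightarrow> length ds \<le> length cs)"

definition touches :: "'a set \<Rightarrow> ('a \<Rightarrow> 'a \<Rightarrow> bool) \<Rightarrow> 'a set \<Rightarrow> 'a \<Rightarrow> 'a \<Rightarrow> bool" where
  "touches V E C v w \<longleftrightarrow> w \<in> C \<and>
     (\<exists>ps. is_path V E ps \<and> hd ps = v \<and> last ps = w \<and> set ps \<inter> C = {w})"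

definition touch_set :: "'a set \<Rightarrow> ('a \<Rightarrow> 'a \<Rightarrow> bool) \<Rightarrow> 'a set \<Rightarrow> 'a \<Rightarrow> 'a set" where
  "touch_set V E C v = {w \<in> C. touches V E C v w}"

definition induced_path_between :: "('a \<Rightarrow> 'a \<Rightarrow> bool) \<Rightarrow> 'a set \<Rightarrow> 'a \<Rightarrow> 'a \<Rightarrow> bool" where
  "induced_path_between E H a b \<longleftrightarrow> (\<exists>ps. distinct ps \<and> ps \<noteq> [] \<and> set ps = H \<and>
     hd ps = a \<and> last ps = b \<and>
     (\<forall>i j. i < length ps \<and> j < length ps \<longrightarrow>
        (E (ps ! i) (ps ! j) \<longleftrightarrow> i = Suc j \<or> j = Suc i)))"

end

theory Submission
  imports Defs
begin


fun walk :: "('a \<Rightarrow> 'a \<Rightarrow> bool) \<Rightarrow> 'a list \<Rightarrow> bool" where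
  "walk E [] = True" | "walk E [x] = True" | "walk E (x#y#r) = (E x y \<and> walk E (y#r))"

lemma walk_iff: "walk E ps \<longleftrightarrow> (\<forall>i. Suc i < length ps \<longrightarrow> E (ps!i) (ps!Suc i))"
proof (induction E ps rule: walk.induct)
  case (3 E x y r)
  show ?case
  proof
    assume "walk E (x#y#r)"
    then show "\<forall>i. Suc i < length (x#y#r) \<longrightarrow> E ((x#y#r)!i) ((x#y#r)!Suc i)"
      using 3 by (auto simp: nth_Cons split: nat.splits)
  next
    assume h: "\<forall>i. Suc i < length (x#y#r) \<longrightarrow> E ((x#y#r)!i) ((x#y#r)!Suc i)"
    have "E x y" using h[rule_format, of 0] by simp
    moreover have "\<forall>i. Suc i < length (y#r) \<longrightarrow> E ((y#r)!i) ((y#r)!Suc i)"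
      using h by (metis Suc_less_eq length_Cons nth_Cons_Suc)
    ultimately show "walk E (x#y#r)" using 3 by simp
  qed
qed auto

lemma walk_append: "xs \<noteq> [] \<Longrightarrow> ys \<noteq> [] \<Longrightarrow>
  walk E (xs @ ys) \<longleftrightarrow> walk E xs \<and> E (last xs) (hd ys) \<and> walk E ys"
proof (induction E xs rule: walk.induct)
  case (2 E x) then show ?case by (cases ys) auto
qed auto

lemma walk_Cons: "ys \<noteq> [] \<Longrightarrow> walk E (x # ys) \<longleftrightarrow> E x (hd ys) \<and> walk E ys"
  by (cases ys) auto

lemma walk_rev: "\<forall>x y. E x y \<longrightarrow> E y x \<Longrightarrow> walk E (rev xs) = walk E xs"
proof (induction E xs rule: walk.induct)
  case (3 E x y r)
  have "walk E (rev (x#y#r)) = walk E (rev (y#r) @ [x])" by simp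
  also have "\<dots> = (walk E (rev (y#r)) \<and> E y x)" by (subst walk_append) auto
  finally show ?case using 3 by auto
qed auto

lemma walk_take: "walk E xs \<Longrightarrow> walk E (take n xs)"
  by (auto simp: walk_iff)

lemma walk_drop: "walk E xs \<Longrightarrow> walk E (drop n xs)"
  by (auto simp: walk_iff)

lemma cyc_intro: "length cs \<ge> 3 \<Longrightarrow> distinct cs \<Longrightarrow> set cs \<subseteq> V \<Longrightarrow> walk E cs \<Longrightarrow>
  E (last cs) (hd cs) \<Longrightarrow> is_cycle V E cs"
  unfolding is_cycle_def
proof (intro conjI allI impI; assumption?)
  fix i assume w: "walk E cs" and l: "E (last cs) (hd cs)" and i: "i < length cs" and "length cs \<ge> 3"
  show "E (cs ! i) (cs ! (Suc i mod length cs))"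
  proof (cases "Suc i < length cs")
    case True then show ?thesis using w by (simp add: walk_iff)
  next
    case False
    then have "Suc i = length cs" using i by simp
    then show ?thesis using l \<open>length cs \<ge> 3\<close>
      by (metis One_nat_def diff_Suc_1 hd_conv_nth last_conv_nth list.size(3) mod_self not_numeral_le_zero)
  qed
qed

lemma cyc_dest: "is_cycle V E cs \<Longrightarrow> walk E cs \<and> E (last cs) (hd cs)"
proof -
  assume c: "is_cycle V E cs"
  then have n: "length cs \<ge> 3" and h: "\<forall>i < length cs. E (cs ! i) (cs ! ((Suc i) mod length cs))"
    by (auto simp: is_cycle_def)
  have "walk E cs" unfolding walk_iff
  proof (intro allI impI)
    fix i assume "Suc i < length cs"
    then show "E (cs ! i) (cs ! Suc i)" using h[rule_format, of i] by simp
  qed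
  moreover have "Suc (length cs - 1) = length cs" using n by simp
  then have "E (cs ! (length cs - 1)) (cs ! 0)" using h[rule_format, of "length cs - 1"] n by simp
  then have "E (last cs) (hd cs)" using n
    by (metis hd_conv_nth last_conv_nth list.size(3) not_numeral_le_zero)
  ultimately show ?thesis by simp
qed

lemma cyc_iff: "is_cycle V E cs \<longleftrightarrow> length cs \<ge> 3 \<and> distinct cs \<and> set cs \<subseteq> V \<and> walk E cs \<and> E (last cs) (hd cs)"
  using cyc_intro cyc_dest unfolding is_cycle_def by metis

lemma cyc_rotate1: "is_cycle V E cs \<Longrightarrow> is_cycle V E (rotate1 cs)"
proof -
  assume c: "is_cycle V E cs"
  then obtain x xs where cs: "cs = x # xs" and ne: "xs \<noteq> []"
    by (cases cs; cases "tl cs") (auto simp: is_cycle_def)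
  have "walk E (xs @ [x])" using c cs ne by (auto simp: cyc_iff walk_append walk_Cons)
  moreover have "E (last (xs@[x])) (hd (xs@[x]))" using c cs ne by (auto simp: cyc_iff walk_Cons)
  ultimately show ?thesis using c cs by (auto simp: cyc_iff)
qed

lemma cyc_rotate: "is_cycle V E cs \<Longrightarrow> is_cycle V E (rotate n cs)"
  by (induction n) (auto simp: cyc_rotate1)

lemma cycle_edges_image: "cycle_edges cs = (\<lambda>i. {cs ! i, cs ! ((Suc i) mod length cs)}) ` {..<length cs}"
  unfolding cycle_edges_def by auto

lemma finite_cycle_edges: "finite (cycle_edges cs)"
  unfolding cycle_edges_image by simp

lemma Union_cycle_edges: "cs \<noteq> [] \<Longrightarrow> \<Union>(cycle_edges cs) = set cs"
  unfolding cycle_edges_def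
  by (auto simp: in_set_conv_nth) (metis mod_less_divisor length_greater_0_conv, blast)

lemma edge_in: "cs = as @ a # b # bs \<Longrightarrow> {a,b} \<in> cycle_edges cs"
  unfolding cycle_edges_def
  apply (rule CollectI, rule exI[of _ "length as"])
  by (auto simp: nth_append)

lemma edge_close: "cs \<noteq> [] \<Longrightarrow> {last cs, hd cs} \<in> cycle_edges cs"
  unfolding cycle_edges_def
  apply (rule CollectI, rule exI[of _ "length cs - 1"])
  by (auto simp: last_conv_nth hd_conv_nth)

lemma gstar_set: "in_G_star V E \<Longrightarrow> is_odd_cycle V E c1 \<Longrightarrow> is_odd_cycle V E c2 \<Longrightarrow>
  e1 \<in> cycle_edges c1 \<Longrightarrow> e1 \<in> cycle_edges c2 \<Longrightarrow> e2 \<in> cycle_edges c1 \<Longrightarrow> e2 \<in> cycle_edges c2 \<Longrightarrow>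
  e1 \<noteq> e2 \<Longrightarrow> set c1 = set c2"
proof -
  assume G: "in_G_star V E" and o: "is_odd_cycle V E c1" "is_odd_cycle V E c2"
    and e: "e1 \<in> cycle_edges c1" "e1 \<in> cycle_edges c2" "e2 \<in> cycle_edges c1" "e2 \<in> cycle_edges c2" "e1 \<noteq> e2"
  have "cycle_edges c1 = cycle_edges c2"
  proof (rule ccontr)
    assume "cycle_edges c1 \<noteq> cycle_edges c2"
    then have le: "card (cycle_edges c1 \<inter> cycle_edges c2) \<le> 1" using G o unfolding in_G_star_def by blast
    have "card {e1, e2} \<le> card (cycle_edges c1 \<inter> cycle_edges c2)"
      by (rule card_mono) (use e finite_cycle_edges in auto)
    then show False using le e(5) by simp
  qed
  moreover have "c1 \<noteq> []" "c2 \<noteq> []" using o by (auto simp: is_odd_cycle_def is_cycle_def)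
  ultimately show ?thesis using Union_cycle_edges by metis
qed



lemma last_take_Suc: "a < length P \<Longrightarrow> last (take (Suc a) P) = P ! a"
  by (metis take_hd_drop hd_drop_conv_nth last_snoc)

lemma shortcut:
  assumes "distinct P" "walk E P" "Suc a < b" "b < length P" "E (P!a) (P!b)"
  defines "N \<equiv> take (Suc a) P @ drop b P"
  shows "distinct N \<and> walk E N \<and> hd N = hd P \<and> last N = last P \<and> set N \<subseteq> set P \<and> set N \<noteq> set P"
proof -
  have d: "distinct N" unfolding N_def using assms set_take_disj_set_drop_if_distinct[of P "Suc a" b] by auto
  have w: "walk E N" unfolding N_def using assms
    by (subst walk_append) (auto simp: walk_take walk_drop last_take_Suc hd_drop_conv_nth)
  have h: "hd N = hd P" unfolding N_def using assms by (cases P) auto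
  have l: "last N = last P" unfolding N_def using assms by simp
  have s: "set N \<subseteq> set P" unfolding N_def by (auto dest: in_set_takeD in_set_dropD)
  have "length N < length P" unfolding N_def using assms by simp
  then have "card (set N) < card (set P)" using d assms(1) by (simp add: distinct_card)
  then have "set N \<noteq> set P" by auto
  with d w h l s show ?thesis by blast
qed

lemma splice:
  assumes "distinct P" "walk E P" "a < b" "b < length P" "distinct S" "S \<noteq> []" "set S \<inter> set P = {}"
    "walk E S" "E (P!a) (hd S)" "E (last S) (P!b)"
  defines "N \<equiv> take (Suc a) P @ S @ drop b P"
  shows "distinct N \<and> walk E N \<and> hd N = hd P \<and> last N = last P \<and> set N \<subseteq> set P \<union> set S \<and> set S \<subseteq> set N"
proof -
  have d: "distinct N" unfolding N_def using assms set_take_disj_set_drop_if_distinct[of P "Suc a" b]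
    by (auto dest: in_set_takeD in_set_dropD)
  have w0: "walk E (S @ drop b P)" using assms
    by (subst walk_append) (auto simp: walk_drop hd_drop_conv_nth)
  have w: "walk E N" using assms w0 unfolding N_def
    by (subst walk_append) (auto simp: walk_take last_take_Suc)
  have h: "hd N = hd P" unfolding N_def using assms by (cases P) auto
  have l: "last N = last P" unfolding N_def using assms by simp
  have s: "set N \<subseteq> set P \<union> set S" unfolding N_def by (auto dest: in_set_takeD in_set_dropD)
  have "set S \<subseteq> set N" unfolding N_def by auto
  with d w h l s show ?thesis by blast
qed

lemma first_hit:
  assumes "R \<noteq> []" "R!0 \<notin> A" "last R \<in> A"
  shows "\<exists>m. 0 < m \<and> m < length R \<and> R!m \<in> A \<and> (\<forall>t<m. R!t \<notin> A)"
proof -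
  have ex: "R ! (length R - 1) \<in> A" using assms by (simp add: last_conv_nth)
  define m where "m = (LEAST m. R!m \<in> A)"
  have m1: "R!m \<in> A" unfolding m_def using ex by (rule LeastI)
  have m2: "m \<le> length R - 1" unfolding m_def using ex by (rule Least_le)
  have m3: "\<forall>t<m. R!t \<notin> A" unfolding m_def using not_less_Least by blast
  have "m \<noteq> 0" using m1 assms(2) by (metis)
  then show ?thesis using m1 m2 m3 assms(1) by (intro exI[of _ m]) auto
qed



theorem mainTheorem10:
  fixes V :: "'a set" and E :: "'a \<Rightarrow> 'a \<Rightarrow> bool" and cs :: "'a list"
    and H :: "'a set" and x1 x2 v1 v2 :: 'a
  assumes graph: "simple_graph V E"
    and Gstar: "in_G_star V E"
    and conn2: "two_connected V E"
    and longest: "longest_odd_cycle V E cs"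
    and len5: "length cs \<ge> 5"
    and nonempty: "V - set cs \<noteq> {}"
    and T: "\<forall>v \<in> V - set cs. touch_set V E (set cs) v = {x1, x2}"
    and x12: "x1 \<noteq> x2" "E x1 x2"
    and comp: "is_component E (V - set cs) H"
    and v1: "v1 \<in> H" "E x1 v1" "\<forall>u\<in>H. E x1 u \<longrightarrow> u = v1"
    and v2: "v2 \<in> H" "E x2 v2" "\<forall>u\<in>H. E x2 u \<longrightarrow> u = v2"
  shows "induced_path_between E H v1 v2"
proof -
  have sym: "\<forall>x y. E x y \<longrightarrow> E y x" and Ein: "\<And>x y. E x y \<Longrightarrow> x \<in> V \<and> y \<in> V \<and> x \<noteq> y"
    using graph unfolding simple_graph_def by auto
  have esym: "\<And>x y. E x y \<Longrightarrow> E y x" using sym by blast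
  have x21: "E x2 x1" and v1x1: "E v1 x1" and v2x2: "E v2 x2"
    using esym[OF x12(2)] esym[OF v1(2)] esym[OF v2(2)] by auto
  have HS: "H \<subseteq> V - set cs" and Hconn: "connected_on E H"
    and Hcl: "\<forall>x\<in>H. \<forall>y\<in>V - set cs. E x y \<longrightarrow> y \<in> H"
    using comp unfolding is_component_def by auto
  have csV: "set cs \<subseteq> V" and csodd: "is_odd_cycle V E cs"
    using longest unfolding longest_odd_cycle_def is_odd_cycle_def is_cycle_def by auto
  have "touch_set V E (set cs) v1 = {x1, x2}" using T v1(1) HS by auto
  then have x12C: "x1 \<in> set cs" "x2 \<in> set cs" unfolding touch_set_def by auto
  have att: "y \<in> H \<or> (y = x1 \<and> u = v1) \<or> (y = x2 \<and> u = v2)" if u: "u \<in> H" and e: "E u y" for u y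
  proof (cases "y \<in> set cs")
    case False
    then show ?thesis using Hcl u e Ein by blast
  next
    case True
    have "is_path V E [u, y]" unfolding is_path_def using e Ein
      by (auto simp: less_Suc_eq nth_Cons split: nat.splits)
    moreover have "set [u,y] \<inter> set cs = {y}" using u HS True by auto
    ultimately have "touches V E (set cs) u y" unfolding touches_def using True
      by (intro conjI exI[of _ "[u,y]"]) auto
    then have "y \<in> {x1, x2}" using T u HS True unfolding touch_set_def by auto
    then show ?thesis using v1(3) v2(3) u esym[OF e] by auto
  qed
  obtain i where i: "i < length cs" "cs ! i = x1" using x12C by (meson in_set_conv_nth)
  define cs' where "cs' = rotate i cs"
  have cs'odd: "is_odd_cycle V E cs'" using csodd cyc_rotate unfolding cs'_def is_odd_cycle_def by auto
  have cs'len: "length cs' = length cs" and cs'set: "set cs' = set cs" unfolding cs'_def by auto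
  have "cs' ! 0 = x1" proof -
    have "0 < length cs" using len5 by linarith
    then have "rotate i cs ! 0 = cs ! ((i + 0) mod length cs)" by (rule nth_rotate)
    then show ?thesis using i by (simp add: cs'_def)
  qed
  then have cs'hd: "hd cs' = x1" using cs'len len5 by (metis hd_conv_nth list.size(3) not_numeral_le_zero)
  obtain ys zs where yz: "cs' = ys @ x2 # zs" using x12C cs'set by (metis split_list)
  then obtain ys' where ys': "ys = x1 # ys'" using cs'hd x12 by (cases ys) auto
  have cs'eq: "cs' = x1 # ys' @ x2 # zs" using yz ys' by simp
  have cs'c: "length cs' \<ge> 3" "distinct cs'" "set cs' \<subseteq> V" "walk E cs'" "E (last cs') (hd cs')"
    using cs'odd unfolding is_odd_cycle_def cyc_iff by auto
  have notchord: "ys' = [] \<or> zs = []"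
  proof (rule ccontr)
    assume "\<not> (ys' = [] \<or> zs = [])"
    then have ne: "ys' \<noteq> []" "zs \<noteq> []" by auto
    define RA where "RA = x1 # ys' @ [x2]"
    define RB where "RB = x2 # zs @ [x1]"
    have dcs: "distinct (x1 # ys' @ x2 # zs)" using cs'c cs'eq by simp
    have wcs: "walk E ((x1 # ys' @ [x2]) @ zs)" using cs'c cs'eq by simp
    then have wRA: "walk E RA" unfolding RA_def using walk_append[of "x1 # ys' @ [x2]" zs E] ne by simp
    have RAc: "is_cycle V E RA"
    proof (rule cyc_intro)
      show "3 \<le> length RA" unfolding RA_def using ne by (cases ys') auto
      show "distinct RA" unfolding RA_def using dcs by auto
      show "set RA \<subseteq> V" unfolding RA_def using cs'c(3) cs'eq by auto
      show "walk E RA" by (rule wRA)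
      show "E (last RA) (hd RA)" unfolding RA_def using x21 by simp
    qed
    have "walk E ((x1 # ys') @ (x2 # zs))" using cs'c cs'eq by simp
    then have "walk E (x2 # zs)" using walk_append[of "x1 # ys'" "x2 # zs" E] by simp
    moreover have "E (last zs) x1" using cs'c(5) cs'eq ne by simp
    ultimately have wRB: "walk E RB" unfolding RB_def using ne
      using walk_append[of "x2 # zs" "[x1]" E] by simp
    have RBc: "is_cycle V E RB"
    proof (rule cyc_intro)
      show "3 \<le> length RB" unfolding RB_def using ne by (cases zs) auto
      show "distinct RB" unfolding RB_def using dcs by auto
      show "set RB \<subseteq> V" unfolding RB_def using cs'c(3) cs'eq by auto
      show "walk E RB" by (rule wRB)
      show "E (last RB) (hd RB)" unfolding RB_def using x12 by simp
    qed
    have lensum: "length RA + length RB = length cs' + 2" unfolding RA_def RB_def cs'eq by simp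
    have oddcs': "odd (length cs')" using cs'odd unfolding is_odd_cycle_def by simp
    show False
    proof (cases "odd (length RA)")
      case True
      have oA: "is_odd_cycle V E RA" using True RAc unfolding is_odd_cycle_def by simp
      have e1A: "{x1, hd ys'} \<in> cycle_edges RA"
        by (rule edge_in[of _ "[]" _ _ "tl ys' @ [x2]"]) (use ne in \<open>simp add: RA_def\<close>)
      have e1C: "{x1, hd ys'} \<in> cycle_edges cs'"
        by (rule edge_in[of _ "[]" _ _ "tl ys' @ x2 # zs"]) (use ne in \<open>simp add: cs'eq\<close>)
      have e2A: "{last ys', x2} \<in> cycle_edges RA"
        by (rule edge_in[of _ "x1 # butlast ys'" _ _ "[]"]) (use ne in \<open>simp add: RA_def\<close>)
      have e2C: "{last ys', x2} \<in> cycle_edges cs'"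
        by (rule edge_in[of _ "x1 # butlast ys'" _ _ "zs"]) (use ne in \<open>simp add: cs'eq\<close>)
      have "x1 \<noteq> last ys'" using dcs ne by auto
      then have "{x1, hd ys'} \<noteq> {last ys', x2}" using x12 by (auto simp: doubleton_eq_iff)
      then have "set RA = set cs'" using gstar_set[OF Gstar oA cs'odd e1A e1C e2A e2C] by simp
      moreover have "hd zs \<notin> set RA" using dcs ne unfolding RA_def by (cases zs) auto
      moreover have "hd zs \<in> set cs'" using ne cs'eq by simp
      ultimately show False by simp
    next
      case False
      then have "odd (length RB)" using lensum oddcs' by presburger
      then have oB: "is_odd_cycle V E RB" using RBc unfolding is_odd_cycle_def by simp
      have e1B: "{x2, hd zs} \<in> cycle_edges RB"
        by (rule edge_in[of _ "[]" _ _ "tl zs @ [x1]"]) (use ne in \<open>simp add: RB_def\<close>)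
      have e1C: "{x2, hd zs} \<in> cycle_edges cs'"
        by (rule edge_in[of _ "x1 # ys'" _ _ "tl zs"]) (use ne in \<open>simp add: cs'eq\<close>)
      have e2B: "{last zs, x1} \<in> cycle_edges RB"
        by (rule edge_in[of _ "x2 # butlast zs" _ _ "[]"]) (use ne in \<open>simp add: RB_def\<close>)
      have e2C: "{last zs, x1} \<in> cycle_edges cs'"
        using edge_close[of cs'] cs'eq ne by simp
      have "x2 \<noteq> last zs" using dcs ne by auto
      then have "{x2, hd zs} \<noteq> {last zs, x1}" using x12 by (auto simp: doubleton_eq_iff)
      then have "set RB = set cs'" using gstar_set[OF Gstar oB cs'odd e1B e1C e2B e2C] by simp
      moreover have "hd ys' \<notin> set RB" using dcs ne unfolding RB_def by (cases ys') auto
      moreover have "hd ys' \<in> set cs'" using ne cs'eq by simp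
      ultimately show False by simp
    qed
  qed
  have x1H: "x1 \<notin> H" "x2 \<notin> H" using x12C HS by auto
  have parity: "odd (length P)"
    if hp: "distinct P" "P \<noteq> []" "set P \<subseteq> H" "walk E P" "hd P = v1" "last P = v2" for P
  proof (rule ccontr)
    assume ev: "\<not> odd (length P)"
    have PV: "set P \<subseteq> V" using hp HS by auto
    have x1P: "x1 \<notin> set P" "x2 \<notin> set P" using hp x1H by auto
    have dcs: "distinct (x1 # ys' @ x2 # zs)" using cs'c cs'eq by simp
    have PC: "set P \<inter> set cs' = {}" using hp HS cs'set by auto
    have oddcs': "odd (length cs')" using cs'odd unfolding is_odd_cycle_def by simp
    obtain Q where Qc: "is_cycle V E Q" and Ql: "length Q = length cs' + length P"
    proof (cases "ys' = []")
      case True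
      define Q where "Q = x2 # zs @ x1 # P"
      have cs2: "cs' = x1 # x2 # zs" using cs'eq True by simp
      have "walk E (x1 # x2 # zs)" using cs'c(4) unfolding cs2 .
      then have w1: "walk E (x2 # zs)" by simp
      have "E (last (x1 # x2 # zs)) (hd (x1 # x2 # zs))" using cs'c(5) unfolding cs2 .
      then have w2: "E (last (x2 # zs)) x1" by simp
      have w3: "walk E (x1 # P)" using hp v1(2) by (simp add: walk_Cons)
      have wQ: "walk E Q" unfolding Q_def
        using walk_append[of "x2 # zs" "x1 # P" E] w1 w2 w3 by simp
      have "is_cycle V E Q" unfolding cyc_iff
      proof (intro conjI)
        show "3 \<le> length Q" unfolding Q_def using hp by (cases P) auto
        show "distinct Q" unfolding Q_def using dcs hp PC cs2 True by auto
        show "set Q \<subseteq> V" unfolding Q_def using PV cs'c(3) cs2 by auto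
        show "walk E Q" by (rule wQ)
        show "E (last Q) (hd Q)" unfolding Q_def using hp v2x2 by simp
      qed
      moreover have "length Q = length cs' + length P" unfolding Q_def cs2 by simp
      ultimately show ?thesis using that by blast
    next
      case False
      then have zs: "zs = []" using notchord by simp
      define Q where "Q = (x1 # ys' @ [x2]) @ rev P"
      have cs2: "cs' = x1 # ys' @ [x2]" using cs'eq zs by simp
      have wr: "walk E (rev P)" using walk_rev[OF sym, of P] hp(4) by simp
      have hr: "hd (rev P) = v2" using hp(2,6) by (simp add: hd_rev)
      have "walk E (x1 # ys' @ [x2])" using cs'c(4) cs2 by simp
      then have wQ: "walk E Q" unfolding Q_def
        using walk_append[of "x1 # ys' @ [x2]" "rev P" E] wr hr hp(2) v2(2) by simp
      have "is_cycle V E Q" unfolding cyc_iff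
      proof (intro conjI)
        show "3 \<le> length Q" unfolding Q_def using hp by (cases P) auto
        show "distinct Q" unfolding Q_def using dcs hp PC cs2 by auto
        show "set Q \<subseteq> V" unfolding Q_def using PV cs'c(3) cs2 by auto
        show "walk E Q" by (rule wQ)
        show "E (last Q) (hd Q)" unfolding Q_def using hp v1x1 by (simp add: last_rev)
      qed
      moreover have "length Q = length cs' + length P" unfolding Q_def cs2 by simp
      ultimately show ?thesis using that by blast
    qed
    have "odd (length Q)" using Ql oddcs' ev by simp
    then have "is_odd_cycle V E Q" using Qc unfolding is_odd_cycle_def by simp
    then have "length Q \<le> length cs" using longest unfolding longest_odd_cycle_def by blast
    then show False using Ql cs'len hp(2) by simp
  qed
  have Dcyc: "is_odd_cycle V E (x1 # P @ [x2]) \<and> {x1, v1} \<in> cycle_edges (x1 # P @ [x2])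
      \<and> {x2, x1} \<in> cycle_edges (x1 # P @ [x2])"
    if hp: "distinct P" "P \<noteq> []" "set P \<subseteq> H" "walk E P" "hd P = v1" "last P = v2" for P
  proof (intro conjI)
    have o: "odd (length P)" using parity hp by blast
    have wP: "walk E (P @ [x2])" using hp v2x2 by (subst walk_append) auto
    show "is_odd_cycle V E (x1 # P @ [x2])" unfolding is_odd_cycle_def cyc_iff
      using o hp x1H x12 HS x12C csV wP v1(2) x21 by (auto simp: walk_Cons Suc_le_eq)
    show "{x1, v1} \<in> cycle_edges (x1 # P @ [x2])"
      by (rule edge_in[of _ "[]" _ _ "tl P @ [x2]"]) (use hp in \<open>cases P; auto\<close>)
    show "{x2, x1} \<in> cycle_edges (x1 # P @ [x2])"
      using edge_close[of "x1 # P @ [x2]"] by simp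
  qed
  have sameset: "set P1 = set P2"
    if hp1: "distinct P1" "P1 \<noteq> []" "set P1 \<subseteq> H" "walk E P1" "hd P1 = v1" "last P1 = v2"
    and hp2: "distinct P2" "P2 \<noteq> []" "set P2 \<subseteq> H" "walk E P2" "hd P2 = v1" "last P2 = v2" for P1 P2
  proof -
    have D1: "is_odd_cycle V E (x1 # P1 @ [x2])" "{x1, v1} \<in> cycle_edges (x1 # P1 @ [x2])"
      "{x2, x1} \<in> cycle_edges (x1 # P1 @ [x2])" using Dcyc[OF hp1] by auto
    have D2: "is_odd_cycle V E (x1 # P2 @ [x2])" "{x1, v1} \<in> cycle_edges (x1 # P2 @ [x2])"
      "{x2, x1} \<in> cycle_edges (x1 # P2 @ [x2])" using Dcyc[OF hp2] by auto
    have "v1 \<noteq> x2" using v1(1) x1H by auto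
    then have "{x1, v1} \<noteq> {x2, x1}" using x12 by (auto simp: doubleton_eq_iff)
    then have "set (x1 # P1 @ [x2]) = set (x1 # P2 @ [x2])"
      using gstar_set[OF Gstar D1(1) D2(1) D1(2) D2(2) D1(3) D2(3)] by simp
    then show ?thesis using hp1 hp2 x1H by auto
  qed
  obtain P where Pp: "is_path H E P" "hd P = v1" "last P = v2"
    using Hconn v1(1) v2(1) unfolding connected_on_def by blast
  have hp: "distinct P" "P \<noteq> []" "set P \<subseteq> H" "walk E P" "hd P = v1" "last P = v2"
    using Pp unfolding is_path_def walk_iff by auto
  have chord: False if ij: "Suc a < b" "b < length P" "E (P!a) (P!b)" for a b
  proof -
    define N where "N = take (Suc a) P @ drop b P"
    have N: "distinct N \<and> walk E N \<and> hd N = hd P \<and> last N = last P \<and> set N \<subseteq> set P \<and> set N \<noteq> set P"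
      unfolding N_def by (rule shortcut) (use hp ij in auto)
    have "N \<noteq> []" unfolding N_def using hp by simp
    then have "set N = set P" using sameset[of N P] N hp by auto
    then show False using N by simp
  qed
  have induced: "E (P!a) (P!b) \<longleftrightarrow> a = Suc b \<or> b = Suc a" if ab: "a < length P" "b < length P" for a b
  proof
    assume e: "E (P!a) (P!b)"
    have "a \<noteq> b" using Ein[OF e] by auto
    show "a = Suc b \<or> b = Suc a"
    proof (rule ccontr)
      assume "\<not> (a = Suc b \<or> b = Suc a)"
      then have "Suc a < b \<or> Suc b < a" using \<open>a \<noteq> b\<close> by linarith
      then show False using chord ab e esym by blast
    qed
  next
    assume "a = Suc b \<or> b = Suc a"
    then show "E (P!a) (P!b)"
    proof
      assume "a = Suc b" then show ?thesis using hp(4) ab unfolding walk_iff by (simp add: esym)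
    next
      assume "b = Suc a" then show ?thesis using hp(4) ab unfolding walk_iff by simp
    qed
  qed
  have cover: "H \<subseteq> set P"
  proof
    fix w0 assume w0: "w0 \<in> H"
    show "w0 \<in> set P"
    proof (rule ccontr)
      assume w0P: "w0 \<notin> set P"
      obtain R0 where R0: "is_path H E R0" "hd R0 = w0" "last R0 = v1"
        using Hconn w0 v1(1) unfolding connected_on_def by blast
      have R0ne: "R0 \<noteq> []" using R0 unfolding is_path_def by simp
      obtain m0 where m0: "0 < m0" "m0 < length R0" "R0!m0 \<in> set P" "\<forall>t<m0. R0!t \<notin> set P"
      proof -
        have "v1 \<in> set P" using hp(2,5) by (metis list.set_sel(1))
        then have "last R0 \<in> set P" using R0(3) by simp
        moreover have "R0!0 \<notin> set P" using R0(2) R0ne w0P by (simp add: hd_conv_nth)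
        ultimately show ?thesis using first_hit[of R0 "set P"] R0ne that by blast
      qed
      define w where "w = R0 ! (m0 - 1)"
      define p where "p = R0 ! m0"
      have ewp: "E w p" using R0(1) m0 unfolding is_path_def w_def p_def
        by (metis Suc_pred' less_imp_le_nat le_less_trans diff_less zero_less_one)
      have wH: "w \<in> H" using R0(1) m0 unfolding is_path_def w_def by auto
      have wP: "w \<notin> set P" using m0 unfolding w_def by auto
      have pP: "p \<in> set P" using m0 p_def by simp
      have pV: "p \<in> V" using pP hp HS by auto
      have "connected_on E (V - {p})" using conn2 pV unfolding two_connected_def by blast
      moreover have "w \<in> V - {p}" using wH HS wP pP by auto
      moreover have "x1 \<in> V - {p}" using x12C csV pP hp x1H by auto
      ultimately obtain R where R: "is_path (V - {p}) E R" "hd R = w" "last R = x1"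
        unfolding connected_on_def by blast
      have Rne: "R \<noteq> []" and Rd: "distinct R" and RV: "set R \<subseteq> V - {p}" and Rw: "walk E R"
        using R unfolding is_path_def walk_iff by auto
      define A where "A = set P \<union> {x1, x2}"
      have "R!0 \<notin> A" using R(2) Rne wP wH x1H unfolding A_def by (auto simp: hd_conv_nth)
      moreover have "last R \<in> A" using R(3) unfolding A_def by simp
      ultimately obtain m where m: "0 < m" "m < length R" "R!m \<in> A" "\<forall>t<m. R!t \<notin> A"
        using first_hit[of R A] Rne by auto
      have inH: "t < m \<Longrightarrow> R!t \<in> H" for t
      proof (induction t)
        case 0 then show ?case using R(2) Rne wH by (simp add: hd_conv_nth)
      next
        case (Suc t)
        then have "R!t \<in> H" by simp
        moreover have "E (R!t) (R!Suc t)" using Rw Suc.prems m(2) unfolding walk_iff by simp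
        ultimately have "R!Suc t \<in> H \<or> R!Suc t = x1 \<or> R!Suc t = x2" using att by blast
        moreover have "R!Suc t \<notin> A" using m(4) Suc.prems by simp
        ultimately show ?case unfolding A_def by auto
      qed
      have mm: "Suc (m - 1) = m" using m(1) by simp
      have prevH: "R!(m-1) \<in> H" using inH m(1) by simp
      have prevA: "R!(m-1) \<notin> A" using m(1,4) by simp
      have eprev: "E (R!(m-1)) (R!m)" using Rw m(2) mm unfolding walk_iff by (metis)
      have "R!m \<in> H" using att[OF prevH eprev] prevA hp v1(1) v2(1) unfolding A_def by auto
      then have RmP: "R!m \<in> set P" using m(3) x1H unfolding A_def by auto
      have Rmp: "R!m \<noteq> p" using RV m(2) by (meson DiffD2 insertI1 nth_mem subsetD)
      define S where "S = take m R"
      have Sne: "S \<noteq> []" unfolding S_def using m Rne by simp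
      have Sd: "distinct S" unfolding S_def using Rd by simp
      have Sw: "walk E S" unfolding S_def using Rw by (rule walk_take)
      have SA: "\<forall>x\<in>set S. x \<notin> A \<and> x \<in> H" unfolding S_def using m(4) inH m(2)
        by (auto simp: in_set_conv_nth)
      have SP: "set S \<inter> set P = {}" using SA unfolding A_def by auto
      have Shd: "hd S = w" unfolding S_def using m R(2) Rne by (simp add: hd_conv_nth)
      have Slast: "last S = R!(m-1)" unfolding S_def using last_take_Suc[of "m-1" R] mm m(2) by simp
      have wS: "w \<in> set S" using Shd Sne by auto
      obtain a where a: "a < length P" "P!a = p" using pP by (meson in_set_conv_nth)
      obtain b where b: "b < length P" "P!b = R!m" using RmP by (meson in_set_conv_nth)
      have "a \<noteq> b" using a b Rmp by auto
      then consider "a < b" | "b < a" by linarith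
      then obtain N where N: "distinct N" "walk E N" "hd N = hd P" "last N = last P"
        "set N \<subseteq> set P \<union> set S" "w \<in> set N"
      proof cases
        case 1
        have "distinct (take (Suc a) P @ S @ drop b P) \<and> walk E (take (Suc a) P @ S @ drop b P) \<and>
          hd (take (Suc a) P @ S @ drop b P) = hd P \<and> last (take (Suc a) P @ S @ drop b P) = last P \<and>
          set (take (Suc a) P @ S @ drop b P) \<subseteq> set P \<union> set S \<and> set S \<subseteq> set (take (Suc a) P @ S @ drop b P)"
          by (rule splice) (use hp 1 b Sd Sne SP Sw Shd Slast a esym[OF ewp] eprev in auto)
        then show ?thesis using that wS by blast
      next
        case 2
        have "distinct (take (Suc b) P @ rev S @ drop a P) \<and> walk E (take (Suc b) P @ rev S @ drop a P) \<and>
          hd (take (Suc b) P @ rev S @ drop a P) = hd P \<and> last (take (Suc b) P @ rev S @ drop a P) = last P \<and>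
          set (take (Suc b) P @ rev S @ drop a P) \<subseteq> set P \<union> set (rev S) \<and> set (rev S) \<subseteq> set (take (Suc b) P @ rev S @ drop a P)"
          by (rule splice) (use hp 2 a Sd Sne SP Sw Shd Slast b ewp esym[OF eprev] walk_rev[OF sym] in \<open>auto simp: hd_rev last_rev\<close>)
        then have hN: "distinct (take (Suc b) P @ rev S @ drop a P)" "walk E (take (Suc b) P @ rev S @ drop a P)"
          "hd (take (Suc b) P @ rev S @ drop a P) = hd P" "last (take (Suc b) P @ rev S @ drop a P) = last P"
          "set (take (Suc b) P @ rev S @ drop a P) \<subseteq> set P \<union> set S" "w \<in> set (take (Suc b) P @ rev S @ drop a P)"
          using wS by auto
        show ?thesis by (rule that[OF hN])
      qed
      have "N \<noteq> []" using N(6) by auto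
      moreover have "set N \<subseteq> H" using N(5) hp SA by auto
      ultimately have "set N = set P" using sameset[of N P] N hp by auto
      then show False using N(6) wP by simp
    qed
  qed
  show ?thesis unfolding induced_path_between_def
    using hp cover induced by (intro exI[of _ P]) auto
qed

end
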